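(* Let $\mathcal A$ be a topological algebra with hypocontinuous multiplication such that $\Omega(\mathcal A)$ separates the points of $\mathcal A^{**}$. Then every $\sigma(\mathcal A^{**},\mathcal A^* )$-cluster point in $\mathcal A^{**}$ of the set of idempotents of $J(\mathcal A)$ is again an idempotent with respect to both Arens products, i.e. if $a_i\in\mathcal A$ with $a_i^2=a_i$ and $J(a_i)\to u$ in $\sigma(\mathcal A^{**},\mathcal A^* )$, then $u\square u=u$ and $u\diamond u=u$.
   Context: $\Omega(\mathcal A)\subseteq\mathcal A^*$ denotes the set of continuous nonzero multiplicative linear functionals on $\mathcal A$; "separates points of $\mathcal A^{**}$" means for $u\ne v$ in $\mathcal A^{**}$ there is $f\in\Omega(\mathcal A)$ with $u(f)\ne v(f)$. $\mathcal A^*,\mathcal A^{**}$ carry strong dual topologies and $J:\mathcal A\to\mathcal A^{**}$ is the evaluation map. Multiplication is hypocontinuous: for every bounded $B\subseteq\mathcal A$ and $0$-neighbourhood $W$ there is a $0$-neighbourhood $V$ with $BV\subseteq W$ and $VB\subseteq W$. Arens products: for $f\in\mathcal A^*$, $a,b\in\mathcal A$, $f_a(b)=f(ab)$, ${}_af(b)=f(ba)$; for $u\in\mathcal A^{**}$, $f_u(b)=u({}_bf)$, ${}_uf(b)=u(f_b)$; $(u\square v)(f)=u({}_vf)$, $(u\diamond v)(f)=v(f_u)$. *)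

theory Defs
  imports "HOL-Analysis.Analysis"
begin

class complex_algebra = ring +
  fixes scaleC :: "complex \<Rightarrow> 'a \<Rightarrow> 'a" (infixr "*\<^sub>C" 75)
  assumes scaleC_add_right: "c *\<^sub>C (x + y) = c *\<^sub>C x + c *\<^sub>C y"
    and scaleC_add_left: "(c + d) *\<^sub>C x = c *\<^sub>C x + d *\<^sub>C x"
    and scaleC_scaleC: "c *\<^sub>C (d *\<^sub>C x) = (c * d) *\<^sub>C x"
    and scaleC_one: "1 *\<^sub>C x = x"
    and mult_scaleC_left: "(c *\<^sub>C x) * y = c *\<^sub>C (x * y)"
    and mult_scaleC_right: "x * (c *\<^sub>C y) = c *\<^sub>C (x * y)"

definition topological_algebra :: "('a::{complex_algebra, topological_space}) itself \<Rightarrow> bool" where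
  "topological_algebra _ \<longleftrightarrow>
     continuous_on UNIV (\<lambda>p::'a \<times> 'a. fst p + snd p) \<and>
     continuous_on UNIV (\<lambda>p::complex \<times> 'a. fst p *\<^sub>C snd p) \<and>
     (\<forall>a::'a. continuous_on UNIV (\<lambda>x. a * x) \<and> continuous_on UNIV (\<lambda>x. x * a))"

definition zero_nbhd :: "'a::{zero,topological_space} set \<Rightarrow> bool" where
  "zero_nbhd V \<longleftrightarrow> (\<exists>U. open U \<and> 0 \<in> U \<and> U \<subseteq> V)"

definition tvs_bounded :: "'a::{complex_algebra, topological_space} set \<Rightarrow> bool" where
  "tvs_bounded B \<longleftrightarrow> (\<forall>V. zero_nbhd V \<longrightarrow>
      (\<exists>s>0. \<forall>t::real. t > s \<longrightarrow> B \<subseteq> (\<lambda>x. complex_of_real t *\<^sub>C x) ` V))"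

definition hypocontinuous_mult :: "('a::{complex_algebra, topological_space}) itself \<Rightarrow> bool" where
  "hypocontinuous_mult _ \<longleftrightarrow> (\<forall>(B::'a set) W. tvs_bounded B \<and> zero_nbhd W \<longrightarrow>
      (\<exists>V. zero_nbhd V \<and> (\<forall>b\<in>B. \<forall>v\<in>V. b * v \<in> W \<and> v * b \<in> W)))"

definition clinear_fun :: "('a::complex_algebra \<Rightarrow> complex) \<Rightarrow> bool" where
  "clinear_fun f \<longleftrightarrow> (\<forall>x y. f (x + y) = f x + f y) \<and> (\<forall>c x. f (c *\<^sub>C x) = c * f x)"

definition dual_space :: "('a::{complex_algebra, topological_space} \<Rightarrow> complex) set" where
  "dual_space = {f. clinear_fun f \<and> continuous_on UNIV f}"

text \<open>Continuity of a functional on \<open>A*\<close> with respect to the strong dual topology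
  (uniform convergence on bounded sets), written via its standard neighbourhood base.\<close>
definition strong_continuous :: "(('a::{complex_algebra, topological_space} \<Rightarrow> complex) \<Rightarrow> complex) \<Rightarrow> bool" where
  "strong_continuous u \<longleftrightarrow> (\<forall>f\<in>dual_space. \<forall>e>0. \<exists>B d. tvs_bounded B \<and> d > 0 \<and>
      (\<forall>g\<in>dual_space. (\<forall>b\<in>B. cmod (g b - f b) < d) \<longrightarrow> cmod (u g - u f) < e))"

text \<open>The bidual \<open>A**\<close>: strongly continuous linear functionals on \<open>A*\<close>
  (only their values on \<open>A*\<close> are relevant).\<close>
definition bidual_space :: "(('a::{complex_algebra, topological_space} \<Rightarrow> complex) \<Rightarrow> complex) set" where
  "bidual_space = {u. (\<forall>f\<in>dual_space. \<forall>g\<in>dual_space. u (\<lambda>x. f x + g x) = u f + u g) \<and>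
                      (\<forall>f\<in>dual_space. \<forall>c. u (\<lambda>x. c * f x) = c * u f) \<and>
                      strong_continuous u}"

definition character_space :: "('a::{complex_algebra, topological_space} \<Rightarrow> complex) set" where
  "character_space = {f \<in> dual_space. (\<exists>x. f x \<noteq> 0) \<and> (\<forall>x y. f (x * y) = f x * f y)}"

definition separates_bidual :: "('a::{complex_algebra, topological_space}) itself \<Rightarrow> bool" where
  "separates_bidual _ \<longleftrightarrow> (\<forall>u\<in>(bidual_space :: (('a \<Rightarrow> complex) \<Rightarrow> complex) set). \<forall>v\<in>bidual_space.
      (\<exists>f\<in>dual_space. u f \<noteq> v f) \<longrightarrow> (\<exists>\<phi>\<in>character_space. u \<phi> \<noteq> v \<phi>))"

text \<open>Arens products: \<open>(u \<box> v)(f) = u(\<^sub>vf)\<close> with \<open>\<^sub>vf(b) = v(f\<^sub>b)\<close>, \<open>f\<^sub>b(c) = f(bc)\<close>;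
  \<open>(u \<diamond> v)(f) = v(f\<^sub>u)\<close> with \<open>f\<^sub>u(b) = u(\<^sub>bf)\<close>, \<open>\<^sub>bf(c) = f(cb)\<close>.\<close>
definition arens_first :: "(('a::times \<Rightarrow> complex) \<Rightarrow> complex) \<Rightarrow> (('a \<Rightarrow> complex) \<Rightarrow> complex) \<Rightarrow> ('a \<Rightarrow> complex) \<Rightarrow> complex" where
  "arens_first u v f = u (\<lambda>b. v (\<lambda>c. f (b * c)))"

definition arens_second :: "(('a::times \<Rightarrow> complex) \<Rightarrow> complex) \<Rightarrow> (('a \<Rightarrow> complex) \<Rightarrow> complex) \<Rightarrow> ('a \<Rightarrow> complex) \<Rightarrow> complex" where
  "arens_second u v f = v (\<lambda>b. u (\<lambda>c. f (c * b)))"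

end

theory Submission
  imports Defs
begin

lemma dual_add: "f \<in> dual_space \<Longrightarrow> g \<in> dual_space \<Longrightarrow> (\<lambda>x. f x + g x) \<in> dual_space"
  unfolding dual_space_def clinear_fun_def
  by (auto simp: algebra_simps intro: continuous_on_add)

lemma dual_scale: "f \<in> dual_space \<Longrightarrow> (\<lambda>x. c * f x) \<in> dual_space"
  unfolding dual_space_def clinear_fun_def
  by (auto simp: algebra_simps intro: continuous_on_mult continuous_on_const)

lemma dual_zero: "(\<lambda>x. 0) \<in> dual_space"
  unfolding dual_space_def clinear_fun_def by auto

lemma dual_f0: assumes "f \<in> dual_space" shows "f 0 = 0"
proof -
  have "f (0 + 0) = f 0 + f 0" using assms unfolding dual_space_def clinear_fun_def by blast
  then show ?thesis by simp
qed

lemma dual_diff: assumes "f \<in> dual_space" shows "f (x - y) = f x - f y"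
proof -
  have "f (x - y + y) = f (x - y) + f y" using assms unfolding dual_space_def clinear_fun_def by blast
  then show ?thesis by (simp add: eq_diff_eq)
qed

lemma bid_add: "u \<in> bidual_space \<Longrightarrow> f \<in> dual_space \<Longrightarrow> g \<in> dual_space \<Longrightarrow> u (\<lambda>x. f x + g x) = u f + u g"
  unfolding bidual_space_def by blast

lemma bid_scale: "u \<in> bidual_space \<Longrightarrow> f \<in> dual_space \<Longrightarrow> u (\<lambda>x. c * f x) = c * u f"
  unfolding bidual_space_def by blast

lemma bid_zero: assumes "u \<in> bidual_space" shows "u (\<lambda>x. 0) = 0"
  using bid_scale[OF assms dual_zero, of 0] by simp

lemma bid_sc:
  assumes "u \<in> bidual_space" "f \<in> dual_space" "e > 0"
  shows "\<exists>B d. tvs_bounded B \<and> d > 0 \<and>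
      (\<forall>g\<in>dual_space. (\<forall>b\<in>B. cmod (g b - f b) < d) \<longrightarrow> cmod (u g - u f) < e)"
  using assms unfolding bidual_space_def strong_continuous_def by blast

lemma m_diff:
  fixes m :: "'a::ring \<Rightarrow> 'b \<Rightarrow> 'a"
  assumes madd1: "\<And>x y z. m (x + y) z = m x z + m y z"
  shows "m (x - y) z = m x z - m y z"
proof -
  have "m (x - y) z + m y z = m x z" using madd1[of "x - y" y z] by simp
  thus ?thesis by (simp add: eq_diff_eq)
qed

lemma dual_comp:
  assumes f: "f \<in> dual_space"
    and madd2: "\<And>x y z. m x (y + z) = m x y + m x z"
    and msc2: "\<And>c x y. m x (c *\<^sub>C y) = c *\<^sub>C m x y"
    and mcont: "\<And>x. continuous_on UNIV (m x)"
  shows "(\<lambda>c. f (m b c)) \<in> dual_space"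
proof -
  have "continuous_on UNIV (f \<circ> m b)"
    using f unfolding dual_space_def
    by (intro continuous_on_compose) (auto intro: continuous_on_subset mcont)
  then show ?thesis using f unfolding dual_space_def clinear_fun_def
    by (auto simp: o_def madd2 msc2)
qed

lemma cont_G:
  fixes m :: "'a::{complex_algebra, topological_space} \<Rightarrow> 'a \<Rightarrow> 'a"
  assumes ta: "topological_algebra TYPE('a)"
    and u: "u \<in> bidual_space" and f: "f \<in> dual_space"
    and madd1: "\<And>x y z. m (x + y) z = m x z + m y z"
    and madd2: "\<And>x y z. m x (y + z) = m x y + m x z"
    and msc2: "\<And>c x y. m x (c *\<^sub>C y) = c *\<^sub>C m x y"
    and mcont: "\<And>x. continuous_on UNIV (m x)"
    and mhyp: "\<And>B W. tvs_bounded B \<Longrightarrow> zero_nbhd W \<Longrightarrow> (\<exists>V. zero_nbhd V \<and> (\<forall>c\<in>B. \<forall>v\<in>V. m v c \<in> W))"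
  shows "continuous_on UNIV (\<lambda>b. u (\<lambda>c. f (m b c)))"
  unfolding continuous_on_topological
proof (intro ballI allI impI)
  fix b0 :: 'a and Ob :: "complex set"
  assume "open Ob" and inO: "u (\<lambda>c. f (m b0 c)) \<in> Ob"
  then obtain e where e: "e > 0" "ball (u (\<lambda>c. f (m b0 c))) e \<subseteq> Ob" by (meson openE)
  have fb0: "(\<lambda>c. f (m b0 c)) \<in> dual_space" by (rule dual_comp[OF f madd2 msc2 mcont])
  from bid_sc[OF u fb0 e(1)] obtain B d where B: "tvs_bounded B" "d > 0"
    and H: "\<forall>g\<in>dual_space. (\<forall>b\<in>B. cmod (g b - f (m b0 b)) < d) \<longrightarrow> cmod (u g - u (\<lambda>c. f (m b0 c))) < e"
    by auto
  define W where "W = f -` ball 0 d"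
  have "open W" unfolding W_def using f by (intro open_vimage) (auto simp: dual_space_def)
  moreover have "0 \<in> W" unfolding W_def using dual_f0[OF f] B by simp
  ultimately have "zero_nbhd W" unfolding zero_nbhd_def by blast
  then obtain V where V: "zero_nbhd V" "\<forall>c\<in>B. \<forall>v\<in>V. m v c \<in> W" using mhyp B by blast
  then obtain U where U: "open U" "0 \<in> U" "U \<subseteq> V" unfolding zero_nbhd_def by blast
  have cadd: "continuous_on UNIV (\<lambda>p::'a \<times> 'a. fst p + snd p)" using ta unfolding topological_algebra_def by blast
  have "continuous_on UNIV ((\<lambda>p::'a \<times> 'a. fst p + snd p) \<circ> (\<lambda>x. (x, -b0)))"
    by (rule continuous_on_compose) (auto intro: continuous_on_Pair continuous_on_id continuous_on_const continuous_on_subset[OF cadd])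
  then have csub: "continuous_on UNIV (\<lambda>x. x + - b0)" by (simp add: o_def)
  define A where "A = (\<lambda>x. x + - b0) -` U"
  have "open A" unfolding A_def by (rule open_vimage[OF U(1) csub])
  moreover have "b0 \<in> A" unfolding A_def using U by simp
  moreover have "\<forall>y\<in>UNIV. y \<in> A \<longrightarrow> u (\<lambda>c. f (m y c)) \<in> Ob"
  proof (intro ballI impI)
    fix b assume "b \<in> A"
    then have "b - b0 \<in> V" using U unfolding A_def by auto
    then have "\<forall>c\<in>B. cmod (f (m b c) - f (m b0 c)) < d"
    proof (intro ballI)
      fix c assume "c \<in> B"
      then have h1: "f (m (b - b0) c) \<in> ball 0 d" using V(2) \<open>b - b0 \<in> V\<close> unfolding W_def by blast
      have "m (b - b0) c = m b c - m b0 c" by (rule m_diff, rule madd1)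
      then show "cmod (f (m b c) - f (m b0 c)) < d" using h1 dual_diff[OF f] by simp
    qed
    then have "cmod (u (\<lambda>c. f (m b c)) - u (\<lambda>c. f (m b0 c))) < e"
      using H[rule_format, OF dual_comp[where b=b and m=m, OF f madd2 msc2 mcont]] by simp
    then show "u (\<lambda>c. f (m b c)) \<in> Ob" using e by (auto simp: dist_norm norm_minus_commute)
  qed
  ultimately show "\<exists>A. open A \<and> b0 \<in> A \<and> (\<forall>y\<in>UNIV. y \<in> A \<longrightarrow> u (\<lambda>c. f (m y c)) \<in> Ob)" by blast
qed


context
  fixes m :: "'a::{complex_algebra, topological_space} \<Rightarrow> 'a \<Rightarrow> 'a"
    and u :: "('a \<Rightarrow> complex) \<Rightarrow> complex"
  assumes ta: "topological_algebra TYPE('a)"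
    and u: "u \<in> bidual_space"
    and madd1: "\<And>x y z. m (x + y) z = m x z + m y z"
    and madd2: "\<And>x y z. m x (y + z) = m x y + m x z"
    and msc1: "\<And>c x y. m (c *\<^sub>C x) y = c *\<^sub>C m x y"
    and msc2: "\<And>c x y. m x (c *\<^sub>C y) = c *\<^sub>C m x y"
    and mcont: "\<And>x. continuous_on UNIV (m x)"
    and mhyp: "\<And>B W. tvs_bounded B \<Longrightarrow> zero_nbhd W \<Longrightarrow> (\<exists>V. zero_nbhd V \<and> (\<forall>c\<in>B. \<forall>v\<in>V. m v c \<in> W))"
begin

lemma dc: "f \<in> dual_space \<Longrightarrow> (\<lambda>c. f (m b c)) \<in> dual_space"
  by (rule dual_comp[where m=m, OF _ madd2 msc2 mcont])

lemma G_dual: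
  assumes f: "f \<in> dual_space"
  shows "(\<lambda>b. u (\<lambda>c. f (m b c))) \<in> dual_space"
proof -
  have lin: "clinear_fun f" using f unfolding dual_space_def by blast
  have "u (\<lambda>c. f (m (x + y) c)) = u (\<lambda>c. f (m x c)) + u (\<lambda>c. f (m y c))" for x y
  proof -
    have "(\<lambda>c. f (m (x + y) c)) = (\<lambda>c. f (m x c) + f (m y c))"
      using lin unfolding clinear_fun_def by (simp add: madd1)
    then show ?thesis using bid_add[OF u dc[OF f] dc[OF f]] by simp
  qed
  moreover have "u (\<lambda>c. f (m (s *\<^sub>C x) c)) = s * u (\<lambda>c. f (m x c))" for s x
  proof -
    have "(\<lambda>c. f (m (s *\<^sub>C x) c)) = (\<lambda>c. s * f (m x c))"
      using lin unfolding clinear_fun_def by (simp add: msc1)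
    then show ?thesis using bid_scale[OF u dc[OF f]] by simp
  qed
  moreover have "continuous_on UNIV (\<lambda>b. u (\<lambda>c. f (m b c)))"
    by (rule cont_G[OF ta u f madd1 madd2 msc2 mcont mhyp])
  ultimately show ?thesis unfolding dual_space_def clinear_fun_def by auto
qed

lemma prod_bounded:
  assumes B1: "tvs_bounded B1" and B0: "tvs_bounded B0"
  shows "tvs_bounded {m b c |b c. b \<in> B1 \<and> c \<in> B0}"
  unfolding tvs_bounded_def
proof (intro allI impI)
  fix W :: "'a set" assume "zero_nbhd W"
  then obtain V where V: "zero_nbhd V" "\<forall>c\<in>B0. \<forall>v\<in>V. m v c \<in> W" using mhyp B0 by blast
  then obtain s where s: "s > 0" "\<forall>t::real. t > s \<longrightarrow> B1 \<subseteq> (\<lambda>x. complex_of_real t *\<^sub>C x) ` V"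
    using B1 unfolding tvs_bounded_def by blast
  show "\<exists>s>0. \<forall>t::real. t > s \<longrightarrow> {m b c |b c. b \<in> B1 \<and> c \<in> B0} \<subseteq> (\<lambda>x. complex_of_real t *\<^sub>C x) ` W"
  proof (intro exI conjI allI impI subsetI)
    show "s > 0" by fact
    fix t :: real and x assume "t > s" "x \<in> {m b c |b c. b \<in> B1 \<and> c \<in> B0}"
    then obtain b c where bc: "x = m b c" "b \<in> B1" "c \<in> B0" by blast
    then obtain v where v: "v \<in> V" "b = complex_of_real t *\<^sub>C v" using s \<open>t > s\<close> by blast
    have "x = complex_of_real t *\<^sub>C m v c" using bc v by (simp add: msc1)
    moreover have "m v c \<in> W" using V v bc by blast
    ultimately show "x \<in> (\<lambda>x. complex_of_real t *\<^sub>C x) ` W" by blast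
  qed
qed

lemma V_bidual: "(\<lambda>f. u (\<lambda>b. u (\<lambda>c. f (m b c)))) \<in> bidual_space"
proof -
  have add: "u (\<lambda>b. u (\<lambda>c. f (m b c) + g (m b c))) =
      u (\<lambda>b. u (\<lambda>c. f (m b c))) + u (\<lambda>b. u (\<lambda>c. g (m b c)))"
    if f: "f \<in> dual_space" and g: "g \<in> dual_space" for f g
  proof -
    have "(\<lambda>b. u (\<lambda>c. f (m b c) + g (m b c))) = (\<lambda>b. u (\<lambda>c. f (m b c)) + u (\<lambda>c. g (m b c)))"
      using bid_add[OF u dc[OF f] dc[OF g]] by simp
    then show ?thesis using bid_add[OF u G_dual[OF f] G_dual[OF g]] by simp
  qed
  have scale: "u (\<lambda>b. u (\<lambda>c. s * f (m b c))) = s * u (\<lambda>b. u (\<lambda>c. f (m b c)))"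
    if f: "f \<in> dual_space" for f s
  proof -
    have "(\<lambda>b. u (\<lambda>c. s * f (m b c))) = (\<lambda>b. s * u (\<lambda>c. f (m b c)))"
      using bid_scale[OF u dc[OF f]] by simp
    then show ?thesis using bid_scale[OF u G_dual[OF f]] by simp
  qed
  have sc: "strong_continuous (\<lambda>f. u (\<lambda>b. u (\<lambda>c. f (m b c))))"
    unfolding strong_continuous_def
  proof (intro ballI allI impI)
    fix f :: "'a \<Rightarrow> complex" and e :: real assume f: "f \<in> dual_space" and e: "e > 0"
    obtain B1 d1 where B1: "tvs_bounded B1" "d1 > 0"
      and H1: "\<forall>h\<in>dual_space. (\<forall>b\<in>B1. cmod (h b - u (\<lambda>c. f (m b c))) < d1) \<longrightarrow>
                 cmod (u h - u (\<lambda>b. u (\<lambda>c. f (m b c)))) < e"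
      using bid_sc[OF u G_dual[OF f] e] by auto
    obtain B0 d0 where B0: "tvs_bounded B0" "d0 > 0"
      and H0: "\<forall>h\<in>dual_space. (\<forall>b\<in>B0. cmod (h b - 0) < d0) \<longrightarrow> cmod (u h - u (\<lambda>x. 0)) < d1"
      using bid_sc[OF u dual_zero B1(2)] by auto
    show "\<exists>B d. tvs_bounded B \<and> d > 0 \<and> (\<forall>g\<in>dual_space. (\<forall>b\<in>B. cmod (g b - f b) < d) \<longrightarrow>
        cmod (u (\<lambda>b. u (\<lambda>c. g (m b c))) - u (\<lambda>b. u (\<lambda>c. f (m b c)))) < e)"
    proof (intro exI conjI ballI impI)
      show "tvs_bounded {m b c |b c. b \<in> B1 \<and> c \<in> B0}" by (rule prod_bounded[OF B1(1) B0(1)])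
      show "d0 > 0" by fact
      fix g :: "'a \<Rightarrow> complex" assume g: "g \<in> dual_space"
        and gd: "\<forall>x\<in>{m b c |b c. b \<in> B1 \<and> c \<in> B0}. cmod (g x - f x) < d0"
      have "cmod (u (\<lambda>c. g (m b c)) - u (\<lambda>c. f (m b c))) < d1" if b: "b \<in> B1" for b
      proof -
        define h where "h = (\<lambda>c. g (m b c) + (-1) * f (m b c))"
        have hd: "h \<in> dual_space" unfolding h_def
          by (rule dual_add[OF dc[OF g] dual_scale[OF dc[OF f]]])
        have "\<forall>c\<in>B0. cmod (h c - 0) < d0"
          using gd b unfolding h_def by auto
        then have "cmod (u h - u (\<lambda>x. 0)) < d1" using H0 hd by blast
        moreover have "u h = u (\<lambda>c. g (m b c)) + (-1) * u (\<lambda>c. f (m b c))"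
          unfolding h_def using bid_add[OF u dc[OF g, of b] dual_scale[OF dc[OF f, of b], of "-1"]]
            bid_scale[OF u dc[OF f, of b], of "-1"]
          by (simp only:)
        ultimately show ?thesis using bid_zero[OF u] by simp
      qed
      then show "cmod (u (\<lambda>b. u (\<lambda>c. g (m b c))) - u (\<lambda>b. u (\<lambda>c. f (m b c)))) < e"
        using H1[rule_format, OF G_dual[OF g]] by simp
    qed
  qed
  show ?thesis unfolding bidual_space_def using add scale sc by auto
qed

end


lemma char_dual: "\<phi> \<in> character_space \<Longrightarrow> \<phi> \<in> dual_space"
  unfolding character_space_def by blast

lemma finish:
  fixes m :: "'a::{complex_algebra, topological_space} \<Rightarrow> 'a \<Rightarrow> 'a"
  assumes sep: "separates_bidual TYPE('a)"
    and Vb: "(\<lambda>f. u (\<lambda>b. u (\<lambda>c. f (m b c)))) \<in> bidual_space"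
    and u: "u \<in> bidual_space"
    and ch: "\<And>\<phi>. \<phi> \<in> character_space \<Longrightarrow> u \<phi> * u \<phi> = u \<phi>"
    and mchar: "\<And>\<phi> x y. \<phi> \<in> character_space \<Longrightarrow> \<phi> (m x y) = \<phi> x * \<phi> y"
  shows "\<forall>f\<in>dual_space. u (\<lambda>b. u (\<lambda>c. f (m b c))) = u f"
proof (rule ccontr)
  assume "\<not> ?thesis"
  then have ex: "\<exists>f\<in>dual_space. (\<lambda>f. u (\<lambda>b. u (\<lambda>c. f (m b c)))) f \<noteq> u f" by simp
  have "\<exists>\<phi>\<in>character_space. (\<lambda>f. u (\<lambda>b. u (\<lambda>c. f (m b c)))) \<phi> \<noteq> u \<phi>"
  proof -
    have H: "\<forall>u\<in>(bidual_space :: (('a \<Rightarrow> complex) \<Rightarrow> complex) set). \<forall>v\<in>bidual_space.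
      (\<exists>f\<in>dual_space. u f \<noteq> v f) \<longrightarrow> (\<exists>\<phi>\<in>character_space. u \<phi> \<noteq> v \<phi>)"
      using sep unfolding separates_bidual_def .
    show ?thesis by (rule H[rule_format, OF Vb u ex])
  qed
  then obtain \<phi> where \<phi>: "\<phi> \<in> character_space" and ne: "u (\<lambda>b. u (\<lambda>c. \<phi> (m b c))) \<noteq> u \<phi>"
    by auto
  have pd: "\<phi> \<in> dual_space" by (rule char_dual[OF \<phi>])
  have "(\<lambda>b. u (\<lambda>c. \<phi> (m b c))) = (\<lambda>b. u (\<lambda>c. \<phi> b * \<phi> c))" using mchar[OF \<phi>] by simp
  also have "\<dots> = (\<lambda>b. \<phi> b * u \<phi>)" using bid_scale[OF u pd] by simp
  also have "\<dots> = (\<lambda>b. u \<phi> * \<phi> b)" by (simp add: mult.commute)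
  finally have "u (\<lambda>b. u (\<lambda>c. \<phi> (m b c))) = u \<phi> * u \<phi>" using bid_scale[OF u pd] by simp
  with ne ch[OF \<phi>] show False by simp
qed

theorem mainTheorem14:
  fixes a :: "'i \<Rightarrow> 'a::{complex_algebra, topological_space}"
    and F :: "'i filter"
    and u :: "('a \<Rightarrow> complex) \<Rightarrow> complex"
  assumes "topological_algebra TYPE('a)"
    and "hypocontinuous_mult TYPE('a)"
    and "separates_bidual TYPE('a)"
    and "F \<noteq> bot"
    and "\<forall>i. a i * a i = a i"
    and "u \<in> bidual_space"
    and "\<forall>f\<in>dual_space. ((\<lambda>i. f (a i)) \<longlongrightarrow> u f) F"
  shows "\<forall>f\<in>dual_space. arens_first u u f = u f \<and> arens_second u u f = u f"
proof -
  note ta = assms(1) and u = assms(6)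
  have ch: "u \<phi> * u \<phi> = u \<phi>" if \<phi>: "\<phi> \<in> character_space" for \<phi>
  proof -
    have pd: "\<phi> \<in> dual_space" by (rule char_dual[OF \<phi>])
    have mul: "\<phi> (x * y) = \<phi> x * \<phi> y" for x y using \<phi> unfolding character_space_def by blast
    have t1: "((\<lambda>i. \<phi> (a i)) \<longlongrightarrow> u \<phi>) F" using assms(7) pd by blast
    have "((\<lambda>i. \<phi> (a i) * \<phi> (a i)) \<longlongrightarrow> u \<phi> * u \<phi>) F" by (intro tendsto_mult t1)
    moreover have "(\<lambda>i. \<phi> (a i) * \<phi> (a i)) = (\<lambda>i. \<phi> (a i))"
    proof (rule ext)
      fix i show "\<phi> (a i) * \<phi> (a i) = \<phi> (a i)" using mul[of "a i" "a i"] assms(5) by simp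
    qed
    ultimately have "((\<lambda>i. \<phi> (a i)) \<longlongrightarrow> u \<phi> * u \<phi>) F" by simp
    moreover have "\<not> trivial_limit F" using assms(4) by (simp add: trivial_limit_def)
    ultimately show ?thesis using tendsto_unique[of F _ "u \<phi> * u \<phi>" "u \<phi>"] t1 by blast
  qed
  have cl: "continuous_on UNIV (\<lambda>y. x * y)" "continuous_on UNIV (\<lambda>y. y * x)" for x :: 'a
    using ta unfolding topological_algebra_def by blast+
  have hyp: "\<exists>V. zero_nbhd V \<and> (\<forall>c\<in>B. \<forall>v\<in>V. c * v \<in> W \<and> v * c \<in> W)"
    if "tvs_bounded B" "zero_nbhd W" for B W :: "'a set"
    using assms(2) that unfolding hypocontinuous_mult_def by blast
  have hyp1: "\<exists>V. zero_nbhd V \<and> (\<forall>c\<in>B. \<forall>v\<in>V. v * c \<in> W)"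
    if "tvs_bounded B" "zero_nbhd W" for B W :: "'a set"
    using hyp[OF that] by blast
  have hyp2: "\<exists>V. zero_nbhd V \<and> (\<forall>c\<in>B. \<forall>v\<in>V. c * v \<in> W)"
    if "tvs_bounded B" "zero_nbhd W" for B W :: "'a set"
    using hyp[OF that] by blast
  have V1: "(\<lambda>f. u (\<lambda>b. u (\<lambda>c. f (b * c)))) \<in> bidual_space"
    by (rule V_bidual[OF ta u distrib_right distrib_left mult_scaleC_left mult_scaleC_right cl(1) hyp1])
  have V2: "(\<lambda>f. u (\<lambda>b. u (\<lambda>c. f (c * b)))) \<in> bidual_space"
    by (rule V_bidual[where m="\<lambda>x y. y * x", OF ta u distrib_left distrib_right mult_scaleC_right mult_scaleC_left cl(2) hyp2])
  have r1: "\<forall>f\<in>dual_space. u (\<lambda>b. u (\<lambda>c. f (b * c))) = u f"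
    by (rule finish[OF assms(3) V1 u ch]) (auto simp: character_space_def)
  have r2: "\<forall>f\<in>dual_space. u (\<lambda>b. u (\<lambda>c. f (c * b))) = u f"
    by (rule finish[where m="\<lambda>x y. y * x", OF assms(3) V2 u ch]) (auto simp: character_space_def mult.commute)
  show ?thesis using r1 r2 unfolding arens_first_def arens_second_def by simp
qed

end
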